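(* For any $1\leq j<i<n$, the following equalities hold in $U^{\mathrm{rtt}}_v(L\mathfrak{gl}_n)$: $$\tilde e^\pm_{j,i+1}(z)=\frac{[\tilde e^{(0)}_{i,i+1},\tilde e^\pm_{ji}(z)]_{v^{-1}}}{v-v^{-1}},\qquad \tilde f^\pm_{i+1,j}(z)=\frac{[\tilde f^\pm_{ij}(z),\tilde f^{(0)}_{i+1,i}]_v}{v^{-1}-v}$$ (each for both signs $\pm$).
   Context: Let $v$ be a formal variable, $E_{ij}$ matrix units, $[a,b]_x=ab-x\,ba$. Let $R_{\mathrm{trig}}(z,w)=(vz-v^{-1}w)\sum_iE_{ii}\otimes E_{ii}+(z-w)\sum_{i\neq j}E_{ii}\otimes E_{jj}+(v-v^{-1})z\sum_{i<j}E_{ij}\otimes E_{ji}+(v-v^{-1})w\sum_{i>j}E_{ij}\otimes E_{ji}$. $\mathfrak{U}^{\mathrm{rtt}}_v(L\mathfrak{gl}_n)$ is the $\mathbb{C}[v,v^{-1}]$-algebra generated by $\{t^\pm_{ij}[\pm r]\}_{1\leq i,j\leq n}^{r\in\mathbb{N}}$ with relations $t^\pm_{ii}[0]t^\mp_{ii}[0]=1$; $t^+_{ij}[0]=t^-_{ji}[0]=0$ for $j<i$; $R_{\mathrm{trig}}(z,w)T^\epsilon_1(z)T^{\epsilon'}_2(w)=T^{\epsilon'}_2(w)T^\epsilon_1(z)R_{\mathrm{trig}}(z,w)$ for $(\epsilon,\epsilon')\in\{(+,+),(-,-),(-,+)\}$, where $T^\pm(z)=\sum_{i,j}t^\pm_{ij}(z)\otimes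 E_{ij}$, $t^\pm_{ij}(z)=\sum_{r\geq0}t^\pm_{ij}[\pm r]z^{\mp r}$. $U^{\mathrm{rtt}}_v(L\mathfrak{gl}_n)=\mathfrak{U}^{\mathrm{rtt}}_v(L\mathfrak{gl}_n)\otimes_{\mathbb{C}[v,v^{-1}]}\mathbb{C}(v)$. Gauss decomposition: $T^\pm(z)=\tilde F^\pm(z)\tilde G^\pm(z)\tilde E^\pm(z)$ with $\tilde F^\pm(z)=\sum_iE_{ii}+\sum_{i>j}\tilde f^\pm_{ij}(z)E_{ij}$, $\tilde G^\pm(z)=\sum_i\tilde g^\pm_i(z)E_{ii}$, $\tilde E^\pm(z)=\sum_iE_{ii}+\sum_{i<j}\tilde e^\pm_{ij}(z)E_{ij}$ (series in $z^{\mp1}$). Write $\tilde e^+_{ij}(z)=\sum_{r\geq0}\tilde e^{(r)}_{ij}z^{-r}$, $\tilde e^-_{ij}(z)=\sum_{r<0}\tilde e^{(r)}_{ij}z^{-r}$, $\tilde f^+_{ij}(z)=\sum_{r>0}\tilde f^{(r)}_{ij}z^{-r}$, $\tilde f^-_{ij}(z)=\sum_{r\leq0}\tilde f^{(r)}_{ij}z^{-r}$. *)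

theory Defs
  imports "HOL-Computational_Algebra.Formal_Power_Series"
          "HOL-Computational_Algebra.Fraction_Field" "HOL-Computational_Algebra.Polynomial"
begin

type_synonym Cv = "complex poly fract"

definition vv :: Cv where "vv = Fract [:0, 1:] 1"

definition Cv_algebra :: "(Cv \<Rightarrow> 'a::ring_1) \<Rightarrow> bool" where
  "Cv_algebra sc \<longleftrightarrow>
     sc 1 = 1 \<and> (\<forall>a b. sc (a + b) = sc a + sc b) \<and> (\<forall>a b. sc (a * b) = sc a * sc b)
     \<and> (\<forall>a x. sc a * x = x * sc a)"

definition qcomm :: "(Cv \<Rightarrow> 'a::ring_1) \<Rightarrow> Cv \<Rightarrow> 'a \<Rightarrow> 'a \<Rightarrow> 'a" where
  "qcomm sc x a b = a * b - sc x * (b * a)"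

text \<open>The coefficient of E_ab (x) E_cd in R_trig(z,w) is  Rz a b c d * z + Rw a b c d * w.\<close>
definition Rz :: "nat \<Rightarrow> nat \<Rightarrow> nat \<Rightarrow> nat \<Rightarrow> Cv" where
  "Rz a b c d =
     (if a = b \<and> c = d then (if a = c then vv else 1)
      else if c = b \<and> d = a \<and> a < b then vv - inverse vv
      else 0)"

definition Rw :: "nat \<Rightarrow> nat \<Rightarrow> nat \<Rightarrow> nat \<Rightarrow> Cv" where
  "Rw a b c d =
     (if a = b \<and> c = d then (if a = c then - inverse vv else -1)
      else if c = b \<and> d = a \<and> b < a then vv - inverse vv
      else 0)"

text \<open>Generators: tp i j r = t^+_{ij}[r] and tm i j r = t^-_{ij}[-r] (r :: nat).
  ser tp tm s i j p is the coefficient of z^p (p :: int) in t^s_{ij}(z),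
  where s = True means sign + and s = False means sign -.\<close>
definition ser :: "(nat \<Rightarrow> nat \<Rightarrow> nat \<Rightarrow> 'a::zero) \<Rightarrow> (nat \<Rightarrow> nat \<Rightarrow> nat \<Rightarrow> 'a)
                   \<Rightarrow> bool \<Rightarrow> nat \<Rightarrow> nat \<Rightarrow> int \<Rightarrow> 'a" where
  "ser tp tm s i j p =
     (if s then (if p \<le> 0 then tp i j (nat (- p)) else 0)
           else (if 0 \<le> p then tm i j (nat p) else 0))"

text \<open>The RTT relation R(z,w) T^s_1(z) T^s'_2(w) = T^s'_2(w) T^s_1(z) R(z,w),
  written out on the matrix entry with row (a,c) and column (b,d) (the coefficient of
  E_ab (x) E_cd) and on the coefficient of the monomial z^p w^q.\<close>
definition RTT_rel :: "(Cv \<Rightarrow> 'a::ring_1) \<Rightarrow> nat \<Rightarrow> (nat \<Rightarrow> nat \<Rightarrow> nat \<Rightarrow> 'a)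
      \<Rightarrow> (nat \<Rightarrow> nat \<Rightarrow> nat \<Rightarrow> 'a) \<Rightarrow> bool \<Rightarrow> bool \<Rightarrow> bool" where
  "RTT_rel sc n tp tm s s' \<longleftrightarrow>
     (\<forall>a\<in>{1..n}. \<forall>b\<in>{1..n}. \<forall>c\<in>{1..n}. \<forall>d\<in>{1..n}. \<forall>p q :: int.
        (\<Sum>x\<in>{1..n}. \<Sum>y\<in>{1..n}.
            sc (Rz a x c y) * ser tp tm s x b (p - 1) * ser tp tm s' y d q
          + sc (Rw a x c y) * ser tp tm s x b p * ser tp tm s' y d (q - 1))
      = (\<Sum>x\<in>{1..n}. \<Sum>y\<in>{1..n}.
            ser tp tm s' c y q * ser tp tm s a x (p - 1) * sc (Rz x b y d)
          + ser tp tm s' c y (q - 1) * ser tp tm s a x p * sc (Rw x b y d)))"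

definition RTT_relations :: "(Cv \<Rightarrow> 'a::ring_1) \<Rightarrow> nat \<Rightarrow> (nat \<Rightarrow> nat \<Rightarrow> nat \<Rightarrow> 'a)
      \<Rightarrow> (nat \<Rightarrow> nat \<Rightarrow> nat \<Rightarrow> 'a) \<Rightarrow> bool" where
  "RTT_relations sc n tp tm \<longleftrightarrow>
     (\<forall>i\<in>{1..n}. tp i i 0 * tm i i 0 = 1 \<and> tm i i 0 * tp i i 0 = 1)
   \<and> (\<forall>i\<in>{1..n}. \<forall>j\<in>{1..n}. j < i \<longrightarrow> tp i j 0 = 0 \<and> tm j i 0 = 0)
   \<and> RTT_rel sc n tp tm True True
   \<and> RTT_rel sc n tp tm False False
   \<and> RTT_rel sc n tp tm False True"

text \<open>Coefficients: e i j r = e~^{(r)}_{ij} (r :: int; r >= 0 from e~^+, r < 0 from e~^-),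
  f i j r = f~^{(r)}_{ij} (r > 0 from f~^+, r <= 0 from f~^-),
  gp i r = coefficient of z^{-r} in g~^+_i(z), gm i r = coefficient of z^r in g~^-_i(z).
  Sign +: power series in X = z^{-1}; sign -: power series in X = z.\<close>

definition Tps :: "(nat \<Rightarrow> nat \<Rightarrow> nat \<Rightarrow> 'a::ring_1) \<Rightarrow> nat \<Rightarrow> nat \<Rightarrow> 'a fps" where
  "Tps t a b = Abs_fps (t a b)"

definition Fp :: "(nat \<Rightarrow> nat \<Rightarrow> int \<Rightarrow> 'a::ring_1) \<Rightarrow> nat \<Rightarrow> nat \<Rightarrow> 'a fps" where
  "Fp f a b = (if a = b then 1 else if b < a
                 then Abs_fps (\<lambda>r. if r = 0 then 0 else f a b (int r)) else 0)"
definition Gp :: "(nat \<Rightarrow> nat \<Rightarrow> 'a::ring_1) \<Rightarrow> nat \<Rightarrow> nat \<Rightarrow> 'a fps" where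
  "Gp g a b = (if a = b then Abs_fps (g a) else 0)"
definition Ep :: "(nat \<Rightarrow> nat \<Rightarrow> int \<Rightarrow> 'a::ring_1) \<Rightarrow> nat \<Rightarrow> nat \<Rightarrow> 'a fps" where
  "Ep e a b = (if a = b then 1 else if a < b then Abs_fps (\<lambda>r. e a b (int r)) else 0)"

definition Fm :: "(nat \<Rightarrow> nat \<Rightarrow> int \<Rightarrow> 'a::ring_1) \<Rightarrow> nat \<Rightarrow> nat \<Rightarrow> 'a fps" where
  "Fm f a b = (if a = b then 1 else if b < a
                 then Abs_fps (\<lambda>s. f a b (- int s)) else 0)"
definition Em :: "(nat \<Rightarrow> nat \<Rightarrow> int \<Rightarrow> 'a::ring_1) \<Rightarrow> nat \<Rightarrow> nat \<Rightarrow> 'a fps" where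
  "Em e a b = (if a = b then 1 else if a < b
                 then Abs_fps (\<lambda>s. if s = 0 then 0 else e a b (- int s)) else 0)"

definition gauss :: "nat \<Rightarrow> (nat \<Rightarrow> nat \<Rightarrow> 'a::ring_1 fps) \<Rightarrow> (nat \<Rightarrow> nat \<Rightarrow> 'a fps)
      \<Rightarrow> (nat \<Rightarrow> nat \<Rightarrow> 'a fps) \<Rightarrow> (nat \<Rightarrow> nat \<Rightarrow> 'a fps) \<Rightarrow> bool" where
  "gauss n T F G E \<longleftrightarrow>
     (\<forall>a\<in>{1..n}. \<forall>b\<in>{1..n}. T a b = (\<Sum>k\<in>{1..n}. \<Sum>l\<in>{1..n}. F a k * G k l * E l b))"

definition gauss_decomp :: "nat \<Rightarrow> (nat \<Rightarrow> nat \<Rightarrow> nat \<Rightarrow> 'a::ring_1) \<Rightarrow> (nat \<Rightarrow> nat \<Rightarrow> nat \<Rightarrow> 'a)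
      \<Rightarrow> (nat \<Rightarrow> nat \<Rightarrow> int \<Rightarrow> 'a) \<Rightarrow> (nat \<Rightarrow> nat \<Rightarrow> 'a) \<Rightarrow> (nat \<Rightarrow> nat \<Rightarrow> 'a)
      \<Rightarrow> (nat \<Rightarrow> nat \<Rightarrow> int \<Rightarrow> 'a) \<Rightarrow> bool" where
  "gauss_decomp n tp tm f gp gm e \<longleftrightarrow>
     gauss n (Tps tp) (Fp f) (Gp gp) (Ep e) \<and> gauss n (Tps tm) (Fm f) (Gp gm) (Em e)"

end

theory Submission
  imports Defs
begin

unbundle fps_syntax


definition cm :: "'b::ring_1 \<Rightarrow> 'b \<Rightarrow> 'b \<Rightarrow> bool" where
  "cm x y s \<longleftrightarrow> x * s = s * x \<and> y * s = s * y"

definition central :: "'b::ring_1 \<Rightarrow> bool" where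
  "central V \<longleftrightarrow> (\<forall>z. V * z = z * V)"

definition PP :: "'b::ring_1 \<Rightarrow> 'b \<Rightarrow> 'b \<Rightarrow> 'b \<Rightarrow> nat \<Rightarrow> nat \<Rightarrow> (nat \<Rightarrow> 'b) \<Rightarrow> bool" where
  "PP x y V K i n R \<longleftrightarrow> (\<forall>b\<in>{1..n}.
     y * R b = (if b = i then V else 1) * R b * y \<and>
     x * R b = (if b = Suc i then V else 1) * R b * x + (if b = i then K * y * R (Suc i) else 0))"

lemma cm_0: "cm x y 0" by (simp add: cm_def)
lemma cm_1: "cm x y 1" by (simp add: cm_def)
lemma cm_mult: "cm x y s \<Longrightarrow> cm x y t \<Longrightarrow> cm x y (s * t)"
  unfolding cm_def by (metis mult.assoc)
lemma cm_add: "cm x y s \<Longrightarrow> cm x y t \<Longrightarrow> cm x y (s + t)"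
  unfolding cm_def by (simp add: distrib_left distrib_right)
lemma cm_diff: "cm x y s \<Longrightarrow> cm x y t \<Longrightarrow> cm x y (s - t)"
  unfolding cm_def by (simp add: left_diff_distrib right_diff_distrib)
lemma cm_sum: "(\<And>k. k \<in> A \<Longrightarrow> cm x y (f k)) \<Longrightarrow> cm x y (\<Sum>k\<in>A. f k)"
proof (induction A rule: infinite_finite_induct)
  case (infinite A) then show ?case by (simp add: cm_0)
next
  case empty then show ?case by (simp add: cm_0)
next
  case (insert a A) then show ?case by (simp add: cm_add)
qed

lemma cm_canc_right:
  assumes "cm x y (s * g)" "cm x y g" "\<And>h. h * g = 0 \<Longrightarrow> h = 0"
  shows "cm x y s"
proof -
  have "(x * s - s * x) * g = 0"
    using assms(1,2) unfolding cm_def by (simp add: left_diff_distrib mult.assoc)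
  moreover have "(y * s - s * y) * g = 0"
    using assms(1,2) unfolding cm_def by (simp add: left_diff_distrib mult.assoc)
  ultimately show ?thesis using assms(3) unfolding cm_def by (metis eq_iff_diff_eq_0)
qed

lemma cm_canc_left:
  assumes "cm x y (g * s)" "cm x y g" "\<And>h. g * h = 0 \<Longrightarrow> h = 0"
  shows "cm x y s"
proof -
  have "g * (x * s - s * x) = 0"
    using assms(1,2) unfolding cm_def by (simp add: right_diff_distrib mult.assoc[symmetric])
  moreover have "g * (y * s - s * y) = 0"
    using assms(1,2) unfolding cm_def by (simp add: right_diff_distrib mult.assoc[symmetric])
  ultimately show ?thesis using assms(3) unfolding cm_def by (metis eq_iff_diff_eq_0)
qed

lemma central_if: "central V \<Longrightarrow> central (if P then V else 1)"
  by (simp add: central_def)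

lemma PP_cong: "PP x y V K i n R \<Longrightarrow> (\<And>b. b \<in> {1..n} \<Longrightarrow> R b = R' b) \<Longrightarrow> Suc i \<in> {1..n}
   \<Longrightarrow> PP x y V K i n R'"
  unfolding PP_def by auto

lemma PP_zero: "PP x y V K i n (\<lambda>b. 0)"
  unfolding PP_def by simp

lemma PP_add: assumes "PP x y V K i n R" "PP x y V K i n S" "central V" "central K"
  shows "PP x y V K i n (\<lambda>b. R b + S b)"
  unfolding PP_def
proof
  fix b assume b: "b \<in> {1..n}"
  have r: "y * R b = (if b = i then V else 1) * R b * y"
     "x * R b = (if b = Suc i then V else 1) * R b * x + (if b = i then K * y * R (Suc i) else 0)"
    using assms(1) b unfolding PP_def by auto
  have s: "y * S b = (if b = i then V else 1) * S b * y"
     "x * S b = (if b = Suc i then V else 1) * S b * x + (if b = i then K * y * S (Suc i) else 0)"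
    using assms(2) b unfolding PP_def by auto
  show "y * (R b + S b) = (if b = i then V else 1) * (R b + S b) * y \<and>
     x * (R b + S b) = (if b = Suc i then V else 1) * (R b + S b) * x + (if b = i then K * y * (R (Suc i) + S (Suc i)) else 0)"
    using r s by (simp add: distrib_left distrib_right)
qed

lemma PP_diff: assumes "PP x y V K i n R" "PP x y V K i n S"
  shows "PP x y V K i n (\<lambda>b. R b - S b)"
  unfolding PP_def
proof
  fix b assume b: "b \<in> {1..n}"
  have r: "y * R b = (if b = i then V else 1) * R b * y"
     "x * R b = (if b = Suc i then V else 1) * R b * x + (if b = i then K * y * R (Suc i) else 0)"
    using assms(1) b unfolding PP_def by auto
  have s: "y * S b = (if b = i then V else 1) * S b * y"
     "x * S b = (if b = Suc i then V else 1) * S b * x + (if b = i then K * y * S (Suc i) else 0)"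
    using assms(2) b unfolding PP_def by auto
  show "y * (R b - S b) = (if b = i then V else 1) * (R b - S b) * y \<and>
     x * (R b - S b) = (if b = Suc i then V else 1) * (R b - S b) * x + (if b = i then K * y * (R (Suc i) - S (Suc i)) else 0)"
    using r s by (simp add: right_diff_distrib left_diff_distrib)
qed

lemma PP_sum: assumes "\<And>k. k \<in> A \<Longrightarrow> PP x y V K i n (R k)" "central V" "central K"
  shows "PP x y V K i n (\<lambda>b. \<Sum>k\<in>A. R k b)"
  using assms(1)
proof (induction A rule: infinite_finite_induct)
  case (infinite A) then show ?case by (simp add: PP_zero)
next
  case empty then show ?case by (simp add: PP_zero)
next
  case (insert a A)
  have "PP x y V K i n (\<lambda>b. \<Sum>k\<in>A. R k b)" using insert by simp
  moreover have "PP x y V K i n (R a)" using insert by simp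
  ultimately have "PP x y V K i n (\<lambda>b. R a b + (\<Sum>k\<in>A. R k b))"
    using PP_add assms by blast
  then show ?case using insert by simp
qed

lemma PP_lmult: assumes "PP x y V K i n R" "cm x y c" "central V" "central K"
  shows "PP x y V K i n (\<lambda>b. c * R b)"
  unfolding PP_def
proof
  fix b assume b: "b \<in> {1..n}"
  let ?w = "(if b = i then V else 1)" let ?u = "(if b = Suc i then V else 1)"
  have r: "y * R b = ?w * R b * y"
     "x * R b = ?u * R b * x + (if b = i then K * y * R (Suc i) else 0)"
    using assms(1) b unfolding PP_def by auto
  have cw: "central ?w" "central ?u" using assms(3) by (simp_all add: central_def)
  have c: "x * c = c * x" "y * c = c * y" using assms(2) by (auto simp: cm_def)
  have "y * (c * R b) = c * (y * R b)" using c by (simp add: mult.assoc[symmetric])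
  also have "\<dots> = ?w * (c * R b) * y" using r(1) cw unfolding central_def by (metis mult.assoc)
  finally have 1: "y * (c * R b) = ?w * (c * R b) * y" .
  have "x * (c * R b) = c * (x * R b)" using c by (simp add: mult.assoc[symmetric])
  also have "\<dots> = c * (?u * R b * x) + c * (if b = i then K * y * R (Suc i) else 0)"
    using r(2) by (simp add: distrib_left)
  also have "c * (?u * R b * x) = ?u * (c * R b) * x" using cw unfolding central_def by (metis mult.assoc)
  also have "c * (if b = i then K * y * R (Suc i) else 0) = (if b = i then K * y * (c * R (Suc i)) else 0)"
    using assms(4) c unfolding central_def by (simp add: mult.assoc) (metis mult.assoc)
  finally show "y * (c * R b) = ?w * (c * R b) * y \<and>
      x * (c * R b) = ?u * (c * R b) * x + (if b = i then K * y * (c * R (Suc i)) else 0)"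
    using 1 by simp
qed

lemma PP_rmult: assumes "PP x y V K i n R" "cm x y c" "central V" "central K"
  shows "PP x y V K i n (\<lambda>b. R b * c)"
  unfolding PP_def
proof
  fix b assume b: "b \<in> {1..n}"
  let ?w = "(if b = i then V else 1)" let ?u = "(if b = Suc i then V else 1)"
  have r: "y * R b = ?w * R b * y"
     "x * R b = ?u * R b * x + (if b = i then K * y * R (Suc i) else 0)"
    using assms(1) b unfolding PP_def by auto
  have c: "x * c = c * x" "y * c = c * y" using assms(2) by (auto simp: cm_def)
  have "y * (R b * c) = ?w * R b * y * c" using r(1) by (metis mult.assoc)
  also have "\<dots> = ?w * (R b * c) * y" using c by (simp add: mult.assoc)
  finally have 1: "y * (R b * c) = ?w * (R b * c) * y" .
  have "x * (R b * c) = (?u * R b * x + (if b = i then K * y * R (Suc i) else 0)) * c"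
    using r(2) by (metis mult.assoc)
  also have "\<dots> = ?u * (R b * c) * x + (if b = i then K * y * (R (Suc i) * c) else 0)"
    using c by (simp add: distrib_right mult.assoc)
  finally show "y * (R b * c) = ?w * (R b * c) * y \<and>
      x * (R b * c) = ?u * (R b * c) * x + (if b = i then K * y * (R (Suc i) * c) else 0)"
    using 1 by simp
qed

lemma PP_canc_left: assumes "PP x y V K i n (\<lambda>b. g * R b)" "cm x y g" "central V" "central K"
   "\<And>h. g * h = 0 \<Longrightarrow> h = 0"
  shows "PP x y V K i n R"
  unfolding PP_def
proof
  fix b assume b: "b \<in> {1..n}"
  let ?w = "(if b = i then V else 1)" let ?u = "(if b = Suc i then V else 1)"
  have r: "y * (g * R b) = ?w * (g * R b) * y"
     "x * (g * R b) = ?u * (g * R b) * x + (if b = i then K * y * (g * R (Suc i)) else 0)"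
    using assms(1) b unfolding PP_def by auto
  have cw: "central ?w" "central ?u" using assms(3) by (simp_all add: central_def)
  have c: "x * g = g * x" "y * g = g * y" using assms(2) by (auto simp: cm_def)
  have "g * (y * R b) = y * (g * R b)" using c by (simp add: mult.assoc[symmetric])
  also have "\<dots> = g * (?w * R b * y)" using r(1) cw unfolding central_def by (metis mult.assoc)
  finally have "g * (y * R b - ?w * R b * y) = 0" by (simp add: right_diff_distrib)
  hence "y * R b - ?w * R b * y = 0" using assms(5) by blast
  hence 1: "y * R b = ?w * R b * y" by simp
  have "g * (x * R b) = x * (g * R b)" using c by (simp add: mult.assoc[symmetric])
  also have "\<dots> = g * (?u * R b * x) + (if b = i then K * y * (g * R (Suc i)) else 0)"
    using r(2) cw unfolding central_def by (metis mult.assoc)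
  also have "(if b = i then K * y * (g * R (Suc i)) else 0) = g * (if b = i then K * y * R (Suc i) else 0)"
    using assms(4) c unfolding central_def by (simp add: mult.assoc) (metis mult.assoc)
  finally have "g * (x * R b - (?u * R b * x + (if b = i then K * y * R (Suc i) else 0))) = 0"
    by (simp add: right_diff_distrib distrib_left)
  hence "x * R b - (?u * R b * x + (if b = i then K * y * R (Suc i) else 0)) = 0" using assms(5) by blast
  hence 2: "x * R b = ?u * R b * x + (if b = i then K * y * R (Suc i) else 0)" by simp
  show "y * R b = ?w * R b * y \<and> x * R b = ?u * R b * x + (if b = i then K * y * R (Suc i) else 0)"
    using 1 2 by simp
qed

lemma PP_canc_right: assumes "PP x y V K i n (\<lambda>b. R b * g)" "cm x y g" "central V" "central K"
   "\<And>h. h * g = 0 \<Longrightarrow> h = 0"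
  shows "PP x y V K i n R"
  unfolding PP_def
proof
  fix b assume b: "b \<in> {1..n}"
  let ?w = "(if b = i then V else 1)" let ?u = "(if b = Suc i then V else 1)"
  have r: "y * (R b * g) = ?w * (R b * g) * y"
     "x * (R b * g) = ?u * (R b * g) * x + (if b = i then K * y * (R (Suc i) * g) else 0)"
    using assms(1) b unfolding PP_def by auto
  have c: "x * g = g * x" "y * g = g * y" using assms(2) by (auto simp: cm_def)
  have "(y * R b) * g = y * (R b * g)" by (simp add: mult.assoc)
  also have "\<dots> = (?w * R b * y) * g" using r(1) c by (simp add: mult.assoc)
  finally have "(y * R b - ?w * R b * y) * g = 0" by (simp add: left_diff_distrib)
  hence "y * R b - ?w * R b * y = 0" using assms(5) by blast
  hence 1: "y * R b = ?w * R b * y" by simp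
  have "(x * R b) * g = x * (R b * g)" by (simp add: mult.assoc)
  also have "\<dots> = (?u * R b * x + (if b = i then K * y * R (Suc i) else 0)) * g"
    using r(2) c by (simp add: mult.assoc distrib_right)
  finally have "(x * R b - (?u * R b * x + (if b = i then K * y * R (Suc i) else 0))) * g = 0"
    by (simp add: left_diff_distrib)
  hence "x * R b - (?u * R b * x + (if b = i then K * y * R (Suc i) else 0)) = 0" using assms(5) by blast
  hence 2: "x * R b = ?u * R b * x + (if b = i then K * y * R (Suc i) else 0)" by simp
  show "y * R b = ?w * R b * y \<and> x * R b = ?u * R b * x + (if b = i then K * y * R (Suc i) else 0)"
    using 1 2 by simp
qed

lemma PP_cm: "PP x y V K i n R \<Longrightarrow> b \<in> {1..n} \<Longrightarrow> b \<noteq> i \<Longrightarrow> b \<noteq> Suc i \<Longrightarrow> cm x y (R b)"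
  unfolding PP_def cm_def by auto


lemma E_ind:
  fixes T F E :: "nat \<Rightarrow> nat \<Rightarrow> 'b::ring_1" and G :: "nat \<Rightarrow> 'b"
  assumes dec: "\<And>a b. a \<in> {1..n} \<Longrightarrow> b \<in> {1..n} \<Longrightarrow> T a b = (\<Sum>k\<in>{1..n}. F a k * G k * E k b)"
    and Fdiag: "\<And>a. F a a = 1" and Fup: "\<And>a k. a < k \<Longrightarrow> F a k = 0"
    and Ediag: "\<And>k. E k k = 1" and Elow: "\<And>k b. b < k \<Longrightarrow> E k b = 0"
    and cancl: "\<And>k h. k \<in> {1..n} \<Longrightarrow> G k * h = 0 \<Longrightarrow> h = 0"
    and cancr: "\<And>k h. k \<in> {1..n} \<Longrightarrow> h * G k = 0 \<Longrightarrow> h = 0"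
    and cV: "central V" and cK: "central K" and iN: "i < n"
    and Trow: "\<And>a. a \<in> {1..n} \<Longrightarrow> a < i \<Longrightarrow> PP x y V K i n (T a)"
  shows "a \<in> {1..n} \<Longrightarrow> a < i \<Longrightarrow> PP x y V K i n (E a)"
proof -
  have main: "a \<in> {1..n} \<longrightarrow> a < i \<longrightarrow> (\<forall>k\<in>{1..n}. cm x y (F a k)) \<and> cm x y (G a) \<and> PP x y V K i n (E a)" for a
  proof (induction a rule: less_induct)
    case (less a)
    show ?case
    proof (intro impI)
      assume a: "a \<in> {1..n}" "a < i"
      have IH: "\<And>k. k \<in> {1..n} \<Longrightarrow> k < a \<Longrightarrow> (\<forall>l\<in>{1..n}. cm x y (F k l)) \<and> cm x y (G k) \<and> PP x y V K i n (E k)"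
        using less a by auto
      have Ecol: "cm x y (E k b)" if "k \<in> {1..n}" "k < a" "b \<in> {1..n}" "b < i" for k b
        using IH[OF that(1,2)] PP_cm[of x y V K i n "E k" b] that a by auto
      have Fcm: "b \<in> {1..n} \<longrightarrow> b < a \<longrightarrow> cm x y (F a b)" for b
      proof (induction b rule: less_induct)
        case (less b)
        show ?case
        proof (intro impI)
          assume b: "b \<in> {1..n}" "b < a"
          have Tcm: "cm x y (T a b)" using Trow[OF a] b a PP_cm[of x y V K i n "T a" b] by auto
          have rest: "cm x y (\<Sum>k\<in>{1..n}-{b}. F a k * G k * E k b)"
          proof (rule cm_sum)
            fix k assume k: "k \<in> {1..n}-{b}"
            show "cm x y (F a k * G k * E k b)"
            proof (cases "k < b")
              case True
              then show ?thesis using less b k IH[of k] Ecol[of k b] a by (auto intro!: cm_mult)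
            next
              case False
              then show ?thesis using k Elow[of b k] Fup[of a k] cm_0
                by (cases "a < k") (auto simp: not_less)
            qed
          qed
          have "T a b = F a b * G b * E b b + (\<Sum>k\<in>{1..n}-{b}. F a k * G k * E k b)"
            using dec[OF a(1) b(1)] b by (simp add: sum.remove)
          hence "F a b * G b = T a b - (\<Sum>k\<in>{1..n}-{b}. F a k * G k * E k b)"
            using Ediag by (simp add: algebra_simps)
          hence "cm x y (F a b * G b)" using Tcm rest cm_diff by simp
          then show "cm x y (F a b)"
            using cm_canc_right IH[of b] b cancr[of b] by blast
        qed
      qed
      have Fall: "cm x y (F a k)" if "k \<in> {1..n}" for k
        using Fcm[of k] Fdiag[of a] Fup[of a k] cm_0 cm_1 that
        by (cases "k < a"; cases "a < k") auto
      have Gcm: "cm x y (G a)"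
      proof -
        have Tcm: "cm x y (T a a)" using Trow[OF a] a PP_cm[of x y V K i n "T a" a] by auto
        have rest: "cm x y (\<Sum>k\<in>{1..n}-{a}. F a k * G k * E k a)"
        proof (rule cm_sum)
          fix k assume k: "k \<in> {1..n}-{a}"
          show "cm x y (F a k * G k * E k a)"
          proof (cases "k < a")
            case True
            then show ?thesis using k IH[of k] Ecol[of k a] a Fall[of k] by (auto intro!: cm_mult)
          next
            case False
            then show ?thesis using k Fup[of a k] cm_0 by auto
          qed
        qed
        have "T a a = F a a * G a * E a a + (\<Sum>k\<in>{1..n}-{a}. F a k * G k * E k a)"
          using dec[OF a(1) a(1)] a by (simp add: sum.remove)
        hence "G a = T a a - (\<Sum>k\<in>{1..n}-{a}. F a k * G k * E k a)"
          using Ediag Fdiag by (simp add: algebra_simps)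
        then show ?thesis using Tcm rest cm_diff by simp
      qed
      have rest: "PP x y V K i n (\<lambda>b. \<Sum>k\<in>{1..n}-{a}. F a k * G k * E k b)"
      proof (rule PP_sum[OF _ cV cK])
        fix k assume k: "k \<in> {1..n}-{a}"
        show "PP x y V K i n (\<lambda>b. F a k * G k * E k b)"
        proof (cases "k < a")
          case True
          then show ?thesis using k IH[of k] Fall[of k] by (auto intro!: PP_lmult cV cK cm_mult)
        next
          case False
          then show ?thesis using k Fup[of a k] PP_zero by auto
        qed
      qed
      have "PP x y V K i n (\<lambda>b. T a b - (\<Sum>k\<in>{1..n}-{a}. F a k * G k * E k b))"
        by (rule PP_diff[OF Trow[OF a] rest])
      hence "PP x y V K i n (\<lambda>b. G a * E a b)"
      proof (rule PP_cong)
        fix b assume b: "b \<in> {1..n}"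
        have "T a b = F a a * G a * E a b + (\<Sum>k\<in>{1..n}-{a}. F a k * G k * E k b)"
          using dec[OF a(1) b] a by (simp add: sum.remove)
        then show "T a b - (\<Sum>k\<in>{1..n}-{a}. F a k * G k * E k b) = G a * E a b"
          using Fdiag by simp
      qed (use iN in auto)
      hence "PP x y V K i n (E a)"
        using PP_canc_left[OF _ Gcm cV cK] cancl[OF a(1)] by blast
      then show "(\<forall>k\<in>{1..n}. cm x y (F a k)) \<and> cm x y (G a) \<and> PP x y V K i n (E a)"
        using Fall Gcm by auto
    qed
  qed
  show "a \<in> {1..n} \<Longrightarrow> a < i \<Longrightarrow> PP x y V K i n (E a)" using main by blast
qed


lemma F_ind:
  fixes T F E :: "nat \<Rightarrow> nat \<Rightarrow> 'b::ring_1" and G :: "nat \<Rightarrow> 'b"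
  assumes dec: "\<And>a b. a \<in> {1..n} \<Longrightarrow> b \<in> {1..n} \<Longrightarrow> T a b = (\<Sum>k\<in>{1..n}. F a k * G k * E k b)"
    and Fdiag: "\<And>a. F a a = 1" and Fup: "\<And>a k. a < k \<Longrightarrow> F a k = 0"
    and Ediag: "\<And>k. E k k = 1" and Elow: "\<And>k b. b < k \<Longrightarrow> E k b = 0"
    and cancl: "\<And>k h. k \<in> {1..n} \<Longrightarrow> G k * h = 0 \<Longrightarrow> h = 0"
    and cancr: "\<And>k h. k \<in> {1..n} \<Longrightarrow> h * G k = 0 \<Longrightarrow> h = 0"
    and cV: "central V" and cK: "central K" and iN: "i < n"
    and Tcol: "\<And>d. d \<in> {1..n} \<Longrightarrow> d < i \<Longrightarrow> PP x y V K i n (\<lambda>c. T c d)"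
  shows "d \<in> {1..n} \<Longrightarrow> d < i \<Longrightarrow> PP x y V K i n (\<lambda>c. F c d)"
proof -
  have main: "d \<in> {1..n} \<longrightarrow> d < i \<longrightarrow> (\<forall>k\<in>{1..n}. cm x y (E k d)) \<and> cm x y (G d) \<and> PP x y V K i n (\<lambda>c. F c d)" for d
  proof (induction d rule: less_induct)
    case (less d)
    show ?case
    proof (intro impI)
      assume d: "d \<in> {1..n}" "d < i"
      have IH: "\<And>k. k \<in> {1..n} \<Longrightarrow> k < d \<Longrightarrow> (\<forall>l\<in>{1..n}. cm x y (E l k)) \<and> cm x y (G k) \<and> PP x y V K i n (\<lambda>c. F c k)"
        using less d by auto
      have Frow: "cm x y (F k l)" if "l \<in> {1..n}" "l < d" "k \<in> {1..n}" "k < i" for k l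
        using IH[OF that(1,2)] PP_cm[of x y V K i n "\<lambda>c. F c l" k] that d by auto
      have Ecm: "k \<in> {1..n} \<longrightarrow> k < d \<longrightarrow> cm x y (E k d)" for k
      proof (induction k rule: less_induct)
        case (less k)
        show ?case
        proof (intro impI)
          assume k: "k \<in> {1..n}" "k < d"
          have Tcm: "cm x y (T k d)" using Tcol[OF d] k d PP_cm[of x y V K i n "\<lambda>c. T c d" k] by auto
          have rest: "cm x y (\<Sum>l\<in>{1..n}-{k}. F k l * G l * E l d)"
          proof (rule cm_sum)
            fix l assume l: "l \<in> {1..n}-{k}"
            show "cm x y (F k l * G l * E l d)"
            proof (cases "l < k")
              case True
              then show ?thesis using less k l IH[of l] Frow[of l k] d by (auto intro!: cm_mult)
            next
              case False
              then show ?thesis using l Fup[of k l] cm_0 by auto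
            qed
          qed
          have "T k d = F k k * G k * E k d + (\<Sum>l\<in>{1..n}-{k}. F k l * G l * E l d)"
            using dec[OF k(1) d(1)] k by (simp add: sum.remove)
          hence "G k * E k d = T k d - (\<Sum>l\<in>{1..n}-{k}. F k l * G l * E l d)"
            using Fdiag by (simp add: algebra_simps)
          hence "cm x y (G k * E k d)" using Tcm rest cm_diff by simp
          then show "cm x y (E k d)"
            using cm_canc_left IH[of k] k cancl[of k] by blast
        qed
      qed
      have Eall: "cm x y (E k d)" if "k \<in> {1..n}" for k
        using Ecm[of k] Ediag[of d] Elow[of d k] cm_0 cm_1 that
        by (cases "k < d"; cases "d < k") auto
      have Gcm: "cm x y (G d)"
      proof -
        have Tcm: "cm x y (T d d)" using Tcol[OF d] d PP_cm[of x y V K i n "\<lambda>c. T c d" d] by auto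
        have rest: "cm x y (\<Sum>l\<in>{1..n}-{d}. F d l * G l * E l d)"
        proof (rule cm_sum)
          fix l assume l: "l \<in> {1..n}-{d}"
          show "cm x y (F d l * G l * E l d)"
          proof (cases "l < d")
            case True
            then show ?thesis using l IH[of l] Frow[of l d] d Eall[of l] by (auto intro!: cm_mult)
          next
            case False
            then show ?thesis using l Elow[of d l] cm_0 by auto
          qed
        qed
        have "T d d = F d d * G d * E d d + (\<Sum>l\<in>{1..n}-{d}. F d l * G l * E l d)"
          using dec[OF d(1) d(1)] d by (simp add: sum.remove)
        hence "G d = T d d - (\<Sum>l\<in>{1..n}-{d}. F d l * G l * E l d)"
          using Ediag Fdiag by (simp add: algebra_simps)
        then show ?thesis using Tcm rest cm_diff by simp
      qed
      have rest: "PP x y V K i n (\<lambda>c. \<Sum>l\<in>{1..n}-{d}. F c l * (G l * E l d))"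
      proof (rule PP_sum[OF _ cV cK])
        fix l assume l: "l \<in> {1..n}-{d}"
        show "PP x y V K i n (\<lambda>c. F c l * (G l * E l d))"
        proof (cases "l < d")
          case True
          then show ?thesis using l IH[of l] Eall[of l] by (auto intro!: PP_rmult cV cK cm_mult)
        next
          case False
          then show ?thesis using l Elow[of d l] PP_zero by auto
        qed
      qed
      have "PP x y V K i n (\<lambda>c. T c d - (\<Sum>l\<in>{1..n}-{d}. F c l * (G l * E l d)))"
        by (rule PP_diff[OF Tcol[OF d] rest])
      hence "PP x y V K i n (\<lambda>c. F c d * G d)"
      proof (rule PP_cong)
        fix c assume c: "c \<in> {1..n}"
        have "T c d = F c d * G d * E d d + (\<Sum>l\<in>{1..n}-{d}. F c l * G l * E l d)"
          using dec[OF c d(1)] d by (simp add: sum.remove)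
        then show "T c d - (\<Sum>l\<in>{1..n}-{d}. F c l * (G l * E l d)) = F c d * G d"
          using Ediag by (simp add: mult.assoc)
      qed (use iN in auto)
      hence "PP x y V K i n (\<lambda>c. F c d)"
        using PP_canc_right[where R="\<lambda>c. F c d", OF _ Gcm cV cK] cancr[OF d(1)] by blast
      then show "(\<forall>k\<in>{1..n}. cm x y (E k d)) \<and> cm x y (G d) \<and> PP x y V K i n (\<lambda>c. F c d)"
        using Eall Gcm by auto
    qed
  qed
  show "d \<in> {1..n} \<Longrightarrow> d < i \<Longrightarrow> PP x y V K i n (\<lambda>c. F c d)" using main by blast
qed



lemma finalE:
  fixes a b X Y U e0 vs iv k ik :: "'a::ring_1"
  assumes h1: "Y*a = vs*a*Y" and h2: "X*a = a*X + k*Y*b" and h3: "X = Y*e0"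
    and u1: "U*Y = 1" and u2: "Y*U = 1"
    and cvs: "\<And>z. vs*z = z*vs" and civ: "\<And>z. iv*z = z*iv" and ck: "\<And>z. k*z = z*k"
    and ivvs: "iv*vs = 1" and ikk: "ik*k = 1"
  shows "b = ik * (e0*a - iv*(a*e0))"
proof -
  have e0: "e0 = U*X" using h3 u1 by (simp add: mult.assoc[symmetric])
  have aU: "a*U = vs*U*a"
  proof -
    have "a*U = U*(Y*a)*U" using u1 by (simp add: mult.assoc[symmetric])
    also have "\<dots> = U*(vs*a*Y)*U" using h1 by simp
    also have "\<dots> = vs*U*a*(Y*U)" using cvs by (simp add: mult.assoc)
    finally show ?thesis using u2 by simp
  qed
  have 1: "iv*(a*e0) = U*a*X"
  proof -
    have "iv*(a*e0) = iv*((a*U)*X)" using e0 by (simp add: mult.assoc)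
    also have "\<dots> = (iv*vs)*(U*a*X)" using aU by (simp add: mult.assoc)
    finally show ?thesis using ivvs by simp
  qed
  have 2: "e0*a = U*a*X + k*b"
  proof -
    have "e0*a = U*(X*a)" using e0 by (simp add: mult.assoc)
    also have "\<dots> = U*a*X + U*(k*Y*b)" using h2 by (simp add: distrib_left mult.assoc)
    also have "U*(k*Y*b) = k*((U*Y)*b)" using ck by (simp add: mult.assoc)
    finally show ?thesis using u1 by simp
  qed
  show ?thesis using 1 2 ikk by (simp add: mult.assoc[symmetric])
qed

lemma finalF:
  fixes a b X Y U f0 vs iv k ik :: "'a::ring_1"
  assumes h1: "Y*a = vs*a*Y" and h2: "X*a = a*X + k*Y*b" and h4: "Y*b = b*Y" and h3: "X = f0*Y"
    and u1: "U*Y = 1" and u2: "Y*U = 1"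
    and cvs: "\<And>z. vs*z = z*vs" and civ: "\<And>z. iv*z = z*iv" and ck: "\<And>z. k*z = z*k"
    and ivvs: "iv*vs = 1" and ikk: "ik*(-k) = 1"
  shows "b = ik * (a*f0 - vs*(f0*a))"
proof -
  have f0: "f0 = X*U" using h3 u2 by (simp add: mult.assoc)
  have Ua: "U*a = iv*a*U"
  proof -
    have "a*U = U*(Y*a)*U" using u1 by (simp add: mult.assoc[symmetric])
    also have "\<dots> = U*(vs*a*Y)*U" using h1 by simp
    also have "\<dots> = vs*U*a*(Y*U)" using cvs by (simp add: mult.assoc)
    finally have "a*U = vs*U*a" using u2 by simp
    hence "iv*(a*U) = (iv*vs)*U*a" by (simp add: mult.assoc)
    thus ?thesis using ivvs by (simp add: mult.assoc)
  qed
  have 1: "vs*(f0*a) = X*a*U"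
  proof -
    have "vs*(f0*a) = vs*(X*(U*a))" using f0 by (simp add: mult.assoc)
    also have "\<dots> = vs*(X*(iv*a*U))" using Ua by simp
    also have "\<dots> = (vs*iv)*(X*a*U)" using civ by (simp add: mult.assoc)
    also have "vs*iv = 1" using ivvs civ by metis
    finally show ?thesis by simp
  qed
  have 2: "a*f0 = a*X*U" using f0 by (simp add: mult.assoc)
  have "a*f0 - vs*(f0*a) = (a*X - X*a)*U" using 1 2 by (simp add: left_diff_distrib)
  also have "\<dots> = -(k*Y*b*U)" using h2 by (simp add: left_diff_distrib distrib_right)
  also have "k*Y*b*U = k*b*(Y*U)" using h4 by (simp add: mult.assoc)
  finally have "a*f0 - vs*(f0*a) = (-k)*b" using u2 by simp
  hence "ik * (a*f0 - vs*(f0*a)) = (ik*(-k))*b" by (simp add: mult.assoc)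
  moreover have "(ik*(-k))*b = b" using ikk by (metis mult_1_left)
  ultimately show ?thesis by simp
qed

lemma fps_canc:
  fixes f :: "'a::ring_1 fps"
  assumes "f $ 0 * u = 1" "u * f $ 0 = 1"
  shows "h * f = 0 \<Longrightarrow> h = 0" and "f * h = 0 \<Longrightarrow> h = 0"
proof -
  assume hf: "h * f = 0"
  have "\<forall>k<m. h $ k = 0" for m
  proof (induction m)
    case 0 then show ?case by simp
  next
    case (Suc m)
    have "0 = (h*f)$m" using hf by simp
    also have "\<dots> = (\<Sum>k=0..m. h $ k * f $ (m-k))" by (rule fps_mult_nth)
    also have "\<dots> = h $ m * f $ 0"
      using Suc by (subst sum.remove[of _ m]) (auto intro!: sum.neutral)
    finally have "h $ m * f $ 0 * u = 0" by simp
    hence "h $ m = 0" using assms(1) by (simp add: mult.assoc)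
    then show ?case using Suc less_Suc_eq by auto
  qed
  then show "h = 0" by (intro fps_ext) auto
next
  assume hf: "f * h = 0"
  have "\<forall>k<m. h $ k = 0" for m
  proof (induction m)
    case 0 then show ?case by simp
  next
    case (Suc m)
    have "0 = (f*h)$m" using hf by simp
    also have "\<dots> = (\<Sum>k=0..m. f $ k * h $ (m-k))" by (rule fps_mult_nth)
    also have "\<dots> = f $ 0 * h $ m"
      using Suc by (subst sum.remove[of _ 0]) (auto intro!: sum.neutral)
    finally have "u * (f $ 0 * h $ m) = 0" by simp
    hence "h $ m = 0" using assms(2) by (simp add: mult.assoc[symmetric])
    then show ?case using Suc less_Suc_eq by auto
  qed
  then show "h = 0" by (intro fps_ext) auto
qed



lemma sc_basic:
  assumes "Cv_algebra sc"
  shows "sc 0 = 0" "sc (- a) = - sc a" "sc 1 = 1" "sc (a * b) = sc a * sc b"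
    "sc a * z = z * sc a" "sc (a + b) = sc a + sc b"
proof -
  have add: "\<And>a b. sc (a + b) = sc a + sc b" using assms by (simp add: Cv_algebra_def)
  show z: "sc 0 = 0" using add[of 0 0] by simp
  show "sc (- a) = - sc a" using add[of a "-a"] z by (metis add.inverse_unique add.right_inverse)
  show "sc 1 = 1" "sc (a * b) = sc a * sc b" "sc a * z = z * sc a" "sc (a + b) = sc a + sc b"
    using assms unfolding Cv_algebra_def by blast+
qed

lemma vv_facts: "vv \<noteq> 0" "vv - inverse vv \<noteq> 0" "inverse vv - vv \<noteq> 0"
proof -
  show nz: "vv \<noteq> 0" unfolding vv_def by (simp add: eq_fract Zero_fract_def)
  have c: "coeff [:0,0,1:] 0 \<noteq> coeff (1::complex poly) 0" by simp
  have sq: "vv * vv \<noteq> 1" unfolding vv_def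
    using c by (auto simp add: eq_fract One_fract_def simp del: pCons_0_0) (metis c)
  show "vv - inverse vv \<noteq> 0"
  proof
    assume "vv - inverse vv = 0"
    hence "vv * vv = inverse vv * vv" by simp
    thus False using sq nz by simp
  qed
  show "inverse vv - vv \<noteq> 0"
  proof
    assume "inverse vv - vv = 0"
    hence "vv * vv = inverse vv * vv" by simp
    thus False using sq nz by simp
  qed
qed

lemma Rw_sum_left:
  fixes A B :: "nat \<Rightarrow> 'a::ring_1"
  assumes "a \<in> {1..n}" "c \<in> {1..n}" "Cv_algebra sc"
  shows "(\<Sum>x\<in>{1..n}. \<Sum>y\<in>{1..n}. sc (Rw a x c y) * A x * B y)
     = sc (if a = c then - inverse vv else -1) * A a * B c
       + (if c < a then sc (vv - inverse vv) * A c * B a else 0)"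
proof -
  have "(\<Sum>x\<in>{1..n}. \<Sum>y\<in>{1..n}. sc (Rw a x c y) * A x * B y)
     = (\<Sum>x\<in>{1..n}. \<Sum>y\<in>{1..n}. (if y = c then (if x = a then sc (if a = c then - inverse vv else -1) * A a * B c else 0) else 0)
          + (if y = a then (if x = c then (if c < a then sc (vv - inverse vv) * A c * B a else 0) else 0) else 0))"
    by (intro sum.cong refl) (auto simp: Rw_def sc_basic(1)[OF assms(3)])
  also have "\<dots> = sc (if a = c then - inverse vv else -1) * A a * B c
       + (if c < a then sc (vv - inverse vv) * A c * B a else 0)"
    using assms(1,2) by (simp only: sum.distrib sum.delta finite_atLeastAtMost if_True)
  finally show ?thesis .
qed

lemma Rw_sum_right:
  fixes A B :: "nat \<Rightarrow> 'a::ring_1"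
  assumes "b \<in> {1..n}" "d \<in> {1..n}" "Cv_algebra sc"
  shows "(\<Sum>x\<in>{1..n}. \<Sum>y\<in>{1..n}. A y * B x * sc (Rw x b y d))
     = A d * B b * sc (if b = d then - inverse vv else -1)
       + (if b < d then A b * B d * sc (vv - inverse vv) else 0)"
proof -
  have "(\<Sum>x\<in>{1..n}. \<Sum>y\<in>{1..n}. A y * B x * sc (Rw x b y d))
     = (\<Sum>x\<in>{1..n}. \<Sum>y\<in>{1..n}. (if y = d then (if x = b then A d * B b * sc (if b = d then - inverse vv else -1) else 0) else 0)
          + (if y = b then (if x = d then (if b < d then A b * B d * sc (vv - inverse vv) else 0) else 0) else 0))"
    by (intro sum.cong refl) (auto simp: Rw_def sc_basic(1)[OF assms(3)])
  also have "\<dots> = A d * B b * sc (if b = d then - inverse vv else -1)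
       + (if b < d then A b * B d * sc (vv - inverse vv) else 0)"
    using assms(1,2) by (simp only: sum.distrib sum.delta finite_atLeastAtMost if_True)
  finally show ?thesis .
qed


lemma ser_facts:
  "ser tp tm True y d 1 = 0" "ser tp tm True y d 0 = tp y d 0"
  "ser tp tm False y d (-1) = 0" "ser tp tm False y d 0 = tm y d 0"
  "ser tp tm True y d (- int m) = tp y d m" "ser tp tm False y d (int m) = tm y d m"
  by (simp_all add: ser_def)

lemma rtt_e:
  fixes sc :: "Cv \<Rightarrow> 'a::ring_1"
  assumes sc: "Cv_algebra sc" and R: "RTT_rel sc n tp tm s True"
    and abcd: "a \<in> {1..n}" "b \<in> {1..n}" "c \<in> {1..n}" "d \<in> {1..n}"
  shows "sc (if a = c then - inverse vv else -1) * ser tp tm s a b p * tp c d 0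
           + (if c < a then sc (vv - inverse vv) * ser tp tm s c b p * tp a d 0 else 0)
       = tp c d 0 * ser tp tm s a b p * sc (if b = d then - inverse vv else -1)
           + (if b < d then tp c b 0 * ser tp tm s a d p * sc (vv - inverse vv) else 0)"
proof -
  have e: "(\<Sum>x\<in>{1..n}. \<Sum>y\<in>{1..n}.
            sc (Rz a x c y) * ser tp tm s x b (p - 1) * ser tp tm True y d 1
          + sc (Rw a x c y) * ser tp tm s x b p * ser tp tm True y d (1 - 1))
      = (\<Sum>x\<in>{1..n}. \<Sum>y\<in>{1..n}.
            ser tp tm True c y 1 * ser tp tm s a x (p - 1) * sc (Rz x b y d)
          + ser tp tm True c y (1 - 1) * ser tp tm s a x p * sc (Rw x b y d))"
    using R abcd unfolding RTT_rel_def by blast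
  have l: "(\<Sum>x\<in>{1..n}. \<Sum>y\<in>{1..n}.
            sc (Rz a x c y) * ser tp tm s x b (p - 1) * ser tp tm True y d 1
          + sc (Rw a x c y) * ser tp tm s x b p * ser tp tm True y d (1 - 1))
     = (\<Sum>x\<in>{1..n}. \<Sum>y\<in>{1..n}. sc (Rw a x c y) * ser tp tm s x b p * tp y d 0)"
    by (simp add: ser_facts)
  have r: "(\<Sum>x\<in>{1..n}. \<Sum>y\<in>{1..n}.
            ser tp tm True c y 1 * ser tp tm s a x (p - 1) * sc (Rz x b y d)
          + ser tp tm True c y (1 - 1) * ser tp tm s a x p * sc (Rw x b y d))
     = (\<Sum>x\<in>{1..n}. \<Sum>y\<in>{1..n}. tp c y 0 * ser tp tm s a x p * sc (Rw x b y d))"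
    by (simp add: ser_facts)
  show ?thesis
    using e unfolding l r
    using Rw_sum_left[OF abcd(1,3) sc, of "\<lambda>x. ser tp tm s x b p" "\<lambda>y. tp y d 0"]
      Rw_sum_right[OF abcd(2,4) sc, of "\<lambda>y. tp c y 0" "\<lambda>x. ser tp tm s a x p"]
    by simp
qed

lemma rtt_f:
  fixes sc :: "Cv \<Rightarrow> 'a::ring_1"
  assumes sc: "Cv_algebra sc" and R: "RTT_rel sc n tp tm False s"
    and abcd: "a \<in> {1..n}" "b \<in> {1..n}" "c \<in> {1..n}" "d \<in> {1..n}"
  shows "sc (if a = c then - inverse vv else -1) * tm a b 0 * ser tp tm s c d q
           + (if c < a then sc (vv - inverse vv) * tm c b 0 * ser tp tm s a d q else 0)
       = ser tp tm s c d q * tm a b 0 * sc (if b = d then - inverse vv else -1)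
           + (if b < d then ser tp tm s c b q * tm a d 0 * sc (vv - inverse vv) else 0)"
proof -
  have e: "(\<Sum>x\<in>{1..n}. \<Sum>y\<in>{1..n}.
            sc (Rz a x c y) * ser tp tm False x b (0 - 1) * ser tp tm s y d (q + 1)
          + sc (Rw a x c y) * ser tp tm False x b 0 * ser tp tm s y d (q + 1 - 1))
      = (\<Sum>x\<in>{1..n}. \<Sum>y\<in>{1..n}.
            ser tp tm s c y (q + 1) * ser tp tm False a x (0 - 1) * sc (Rz x b y d)
          + ser tp tm s c y (q + 1 - 1) * ser tp tm False a x 0 * sc (Rw x b y d))"
    using R abcd unfolding RTT_rel_def by blast
  have l: "(\<Sum>x\<in>{1..n}. \<Sum>y\<in>{1..n}.
            sc (Rz a x c y) * ser tp tm False x b (0 - 1) * ser tp tm s y d (q + 1)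
          + sc (Rw a x c y) * ser tp tm False x b 0 * ser tp tm s y d (q + 1 - 1))
     = (\<Sum>x\<in>{1..n}. \<Sum>y\<in>{1..n}. sc (Rw a x c y) * tm x b 0 * ser tp tm s y d q)"
    by (simp add: ser_facts)
  have r: "(\<Sum>x\<in>{1..n}. \<Sum>y\<in>{1..n}.
            ser tp tm s c y (q + 1) * ser tp tm False a x (0 - 1) * sc (Rz x b y d)
          + ser tp tm s c y (q + 1 - 1) * ser tp tm False a x 0 * sc (Rw x b y d))
     = (\<Sum>x\<in>{1..n}. \<Sum>y\<in>{1..n}. ser tp tm s c y q * tm a x 0 * sc (Rw x b y d))"
    by (simp add: ser_facts)
  show ?thesis
    using e unfolding l r
    using Rw_sum_left[OF abcd(1,3) sc, of "\<lambda>x. tm x b 0" "\<lambda>y. ser tp tm s y d q"]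
      Rw_sum_right[OF abcd(2,4) sc, of "\<lambda>y. ser tp tm s c y q" "\<lambda>x. tm a x 0"]
    by simp
qed


lemma sc_inv_vv: "Cv_algebra sc \<Longrightarrow> sc (inverse vv) * sc vv = 1"
  using sc_basic(3,4)[of sc] vv_facts(1) by (metis left_inverse)

lemma twist1:
  fixes sc :: "Cv \<Rightarrow> 'a::ring_1"
  assumes sc: "Cv_algebra sc" and h: "tb * Y = Y * tb * sc (inverse vv)"
  shows "Y * tb = sc vv * tb * Y"
proof -
  have "sc vv * tb * Y = sc vv * (Y * tb * sc (inverse vv))" using h by (simp add: mult.assoc)
  also have "\<dots> = Y * tb * (sc (inverse vv) * sc vv)"
    using sc_basic(5)[OF sc] by (metis mult.assoc)
  finally show ?thesis using sc_inv_vv[OF sc] by simp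
qed

lemma twist2:
  fixes sc :: "Cv \<Rightarrow> 'a::ring_1"
  assumes sc: "Cv_algebra sc" and h: "tb * Y = sc (inverse vv) * Y * tb"
  shows "Y * tb = sc vv * tb * Y"
proof -
  have "sc vv * tb * Y = sc vv * (sc (inverse vv) * Y * tb)" using h by (simp add: mult.assoc)
  also have "\<dots> = (sc (inverse vv) * sc vv) * Y * tb"
    using sc_basic(5)[OF sc] by (metis mult.assoc)
  finally show ?thesis using sc_inv_vv[OF sc] by simp
qed

lemma row_alg:
  fixes sc :: "Cv \<Rightarrow> 'a::ring_1" and tb ti ti1 Y Xx Xib :: 'a
  assumes sc: "Cv_algebra sc"
    and R1: "sc (-1) * tb * Y = Y * tb * sc (if b = i then - inverse vv else -1) + (if b < i then Xib * ti * sc k else 0)"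
    and R2: "sc (-1) * tb * Xx = Xx * tb * sc (if b = Suc i then - inverse vv else -1) + (if b < Suc i then Xib * ti1 * sc k else 0)"
    and X0: "b < i \<Longrightarrow> Xib = 0" and Xii: "b = i \<Longrightarrow> Xib = Y"
  shows "Y * tb = (if b = i then sc vv else 1) * tb * Y \<and>
         Xx * tb = (if b = Suc i then sc vv else 1) * tb * Xx + (if b = i then sc k * Y * ti1 else 0)"
proof -
  note S = sc_basic(1,2,3,4,6)[OF sc]
  consider "b < i" | "b = i" | "b = Suc i" | "Suc i < b" by linarith
  then show ?thesis
  proof cases
    case 1
    then show ?thesis using R1 R2 X0 S by simp
  next
    case 2
    have a: "tb * Y = Y * tb * sc (inverse vv)" using R1 2 S by simp
    have b: "Xx * tb = tb * Xx + Y * ti1 * sc k" using R2 2 Xii S by (simp add: algebra_simps)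
    have c: "Y * ti1 * sc k = sc k * Y * ti1" using sc_basic(5)[OF sc] by (metis mult.assoc)
    show ?thesis using twist1[OF sc a] b c 2 by simp
  next
    case 3
    have a: "tb * Xx = Xx * tb * sc (inverse vv)" using R2 3 S by simp
    show ?thesis using twist1[OF sc a] R1 3 S by simp
  next
    case 4
    then show ?thesis using R1 R2 S by simp
  qed
qed

lemma col_alg:
  fixes sc :: "Cv \<Rightarrow> 'a::ring_1" and tc tid ti1d Y Xx Xci :: 'a
  assumes sc: "Cv_algebra sc"
    and C1: "sc (if i = c then - inverse vv else -1) * Y * tc + (if c < i then sc k * Xci * tid else 0) = tc * Y * sc (-1)"
    and C2: "sc (if Suc i = c then - inverse vv else -1) * Xx * tc + (if c < Suc i then sc k * Xci * ti1d else 0) = tc * Xx * sc (-1)"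
    and X0: "c < i \<Longrightarrow> Xci = 0" and Xii: "c = i \<Longrightarrow> Xci = Y"
  shows "Y * tc = (if c = i then sc vv else 1) * tc * Y \<and>
         Xx * tc = (if c = Suc i then sc vv else 1) * tc * Xx + (if c = i then sc k * Y * ti1d else 0)"
proof -
  note S = sc_basic(1,2,3,4,6)[OF sc]
  consider "c < i" | "c = i" | "c = Suc i" | "Suc i < c" by linarith
  then show ?thesis
  proof cases
    case 1
    then show ?thesis using C1 C2 X0 S by simp
  next
    case 2
    have a: "tc * Y = sc (inverse vv) * Y * tc" using C1 2 S by simp
    have b: "Xx * tc = tc * Xx + sc k * Y * ti1d" using C2 2 Xii S by (simp add: algebra_simps)
    show ?thesis using twist2[OF sc a] b 2 by simp
  next
    case 3
    have a: "tc * Xx = sc (inverse vv) * Xx * tc" using C2 3 S by simp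
    show ?thesis using twist2[OF sc a] C1 3 S by simp
  next
    case 4
    then show ?thesis using C1 C2 S by simp
  qed
qed



lemma fps_central:
  assumes "\<And>z::'a::ring_1. c * z = z * c"
  shows "central (fps_const c)"
  unfolding central_def
proof
  fix f :: "'a fps"
  show "fps_const c * f = f * fps_const c"
    by (rule fps_ext) (simp add: assms)
qed

lemma ser_t: "ser tp tm s x y (if s then - int m else int m) = (if s then tp else tm) x y m"
  by (cases s) (simp_all add: ser_facts)

lemma Tps_nth: "Tps t a b $ m = t a b m" by (simp add: Tps_def)

lemma rowPP:
  fixes sc :: "Cv \<Rightarrow> 'a::ring_1"
  assumes sc: "Cv_algebra sc" and R: "RTT_rel sc n tp tm s True"
    and Z: "\<And>b. b \<in> {1..n} \<Longrightarrow> b < i \<Longrightarrow> tp i b 0 = 0"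
    and a: "a \<in> {1..n}" "a < i" and iN: "i < n"
  shows "PP (fps_const (tp i (Suc i) 0)) (fps_const (tp i i 0)) (fps_const (sc vv))
            (fps_const (sc (vv - inverse vv))) i n (Tps (if s then tp else tm) a)"
  unfolding PP_def
proof
  fix b assume b: "b \<in> {1..n}"
  let ?t = "if s then tp else tm"
  have i1: "i \<in> {1..n}" "Suc i \<in> {1..n}" using a iN by auto
  have alg: "tp i i 0 * ?t a b m = (if b = i then sc vv else 1) * ?t a b m * tp i i 0 \<and>
         tp i (Suc i) 0 * ?t a b m = (if b = Suc i then sc vv else 1) * ?t a b m * tp i (Suc i) 0
            + (if b = i then sc (vv - inverse vv) * tp i i 0 * ?t a (Suc i) m else 0)" for m
  proof (rule row_alg[OF sc, where Xib = "tp i b 0" and ti = "?t a i m"])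
    let ?p = "if s then - int m else int m"
    note r1 = rtt_e[OF sc R a(1) b i1(1) i1(1), of ?p]
    show "sc (-1) * ?t a b m * tp i i 0 = tp i i 0 * ?t a b m * sc (if b = i then - inverse vv else -1)
       + (if b < i then tp i b 0 * ?t a i m * sc (vv - inverse vv) else 0)"
      using r1 a unfolding ser_t by simp
    note r2 = rtt_e[OF sc R a(1) b i1(1) i1(2), of ?p]
    show "sc (-1) * ?t a b m * tp i (Suc i) 0 = tp i (Suc i) 0 * ?t a b m * sc (if b = Suc i then - inverse vv else -1)
       + (if b < Suc i then tp i b 0 * ?t a (Suc i) m * sc (vv - inverse vv) else 0)"
      using r2 a unfolding ser_t by simp
  qed (use Z b in auto)
  have w1: "(if b = i then fps_const (sc vv) else 1) = fps_const (if b = i then sc vv else 1)" by simp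
  have w2: "(if b = Suc i then fps_const (sc vv) else 1) = fps_const (if b = Suc i then sc vv else 1)" by simp
  show "fps_const (tp i i 0) * Tps ?t a b = (if b = i then fps_const (sc vv) else 1) * Tps ?t a b * fps_const (tp i i 0) \<and>
        fps_const (tp i (Suc i) 0) * Tps ?t a b = (if b = Suc i then fps_const (sc vv) else 1) * Tps ?t a b * fps_const (tp i (Suc i) 0)
          + (if b = i then fps_const (sc (vv - inverse vv)) * fps_const (tp i i 0) * Tps ?t a (Suc i) else 0)"
    unfolding w1 w2
  proof (intro conjI fps_ext)
    fix m
    show "(fps_const (tp i i 0) * Tps ?t a b) $ m = (fps_const (if b = i then sc vv else 1) * Tps ?t a b * fps_const (tp i i 0)) $ m"
      using alg[of m] by (simp add: Tps_nth)
    show "(fps_const (tp i (Suc i) 0) * Tps ?t a b) $ m = (fps_const (if b = Suc i then sc vv else 1) * Tps ?t a b * fps_const (tp i (Suc i) 0)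
          + (if b = i then fps_const (sc (vv - inverse vv)) * fps_const (tp i i 0) * Tps ?t a (Suc i) else 0)) $ m"
      using alg[of m] by (cases "b = i") (simp_all add: Tps_nth)
  qed
qed


lemma colPP:
  fixes sc :: "Cv \<Rightarrow> 'a::ring_1"
  assumes sc: "Cv_algebra sc" and R: "RTT_rel sc n tp tm False s"
    and Z: "\<And>c. c \<in> {1..n} \<Longrightarrow> c < i \<Longrightarrow> tm c i 0 = 0"
    and d: "d \<in> {1..n}" "d < i" and iN: "i < n"
  shows "PP (fps_const (tm (Suc i) i 0)) (fps_const (tm i i 0)) (fps_const (sc vv))
            (fps_const (sc (vv - inverse vv))) i n (\<lambda>c. Tps (if s then tp else tm) c d)"
  unfolding PP_def
proof
  fix c assume c: "c \<in> {1..n}"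
  let ?t = "if s then tp else tm"
  have i1: "i \<in> {1..n}" "Suc i \<in> {1..n}" using d iN by auto
  have alg: "tm i i 0 * ?t c d m = (if c = i then sc vv else 1) * ?t c d m * tm i i 0 \<and>
         tm (Suc i) i 0 * ?t c d m = (if c = Suc i then sc vv else 1) * ?t c d m * tm (Suc i) i 0
            + (if c = i then sc (vv - inverse vv) * tm i i 0 * ?t (Suc i) d m else 0)" for m
  proof (rule col_alg[OF sc, where Xci = "tm c i 0" and tid = "?t i d m"])
    let ?q = "if s then - int m else int m"
    note r1 = rtt_f[OF sc R i1(1) i1(1) c d(1), of ?q]
    show "sc (if i = c then - inverse vv else -1) * tm i i 0 * ?t c d m
        + (if c < i then sc (vv - inverse vv) * tm c i 0 * ?t i d m else 0) = ?t c d m * tm i i 0 * sc (-1)"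
      using r1 d unfolding ser_t by simp
    note r2 = rtt_f[OF sc R i1(2) i1(1) c d(1), of ?q]
    show "sc (if Suc i = c then - inverse vv else -1) * tm (Suc i) i 0 * ?t c d m
        + (if c < Suc i then sc (vv - inverse vv) * tm c i 0 * ?t (Suc i) d m else 0) = ?t c d m * tm (Suc i) i 0 * sc (-1)"
      using r2 d unfolding ser_t by simp
  qed (use Z c in auto)
  have w1: "(if c = i then fps_const (sc vv) else 1) = fps_const (if c = i then sc vv else 1)" by simp
  have w2: "(if c = Suc i then fps_const (sc vv) else 1) = fps_const (if c = Suc i then sc vv else 1)" by simp
  show "fps_const (tm i i 0) * Tps ?t c d = (if c = i then fps_const (sc vv) else 1) * Tps ?t c d * fps_const (tm i i 0) \<and>
        fps_const (tm (Suc i) i 0) * Tps ?t c d = (if c = Suc i then fps_const (sc vv) else 1) * Tps ?t c d * fps_const (tm (Suc i) i 0)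
          + (if c = i then fps_const (sc (vv - inverse vv)) * fps_const (tm i i 0) * Tps ?t (Suc i) d else 0)"
    unfolding w1 w2
  proof (intro conjI fps_ext)
    fix m
    show "(fps_const (tm i i 0) * Tps ?t c d) $ m = (fps_const (if c = i then sc vv else 1) * Tps ?t c d * fps_const (tm i i 0)) $ m"
      using alg[of m] by (simp add: Tps_nth)
    show "(fps_const (tm (Suc i) i 0) * Tps ?t c d) $ m = (fps_const (if c = Suc i then sc vv else 1) * Tps ?t c d * fps_const (tm (Suc i) i 0)
          + (if c = i then fps_const (sc (vv - inverse vv)) * fps_const (tm i i 0) * Tps ?t (Suc i) d else 0)) $ m"
      using alg[of m] by (cases "c = i") (simp_all add: Tps_nth)
  qed
qed

lemma gauss_dec:
  assumes "gauss n T F (Gp g) E" "a \<in> {1..n}" "b \<in> {1..n}"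
  shows "T a b = (\<Sum>k\<in>{1..n}. F a k * Abs_fps (g k) * E k b)"
proof -
  have "T a b = (\<Sum>k\<in>{1..n}. \<Sum>l\<in>{1..n}. F a k * Gp g k l * E l b)"
    using assms unfolding gauss_def by blast
  also have "\<dots> = (\<Sum>k\<in>{1..n}. F a k * Abs_fps (g k) * E k b)"
  proof (rule sum.cong[OF refl])
    fix k assume k: "k \<in> {1..n}"
    have "(\<Sum>l\<in>{1..n}. F a k * Gp g k l * E l b) = (\<Sum>l\<in>{1..n}. if l = k then F a k * Abs_fps (g k) * E k b else 0)"
      by (rule sum.cong) (auto simp: Gp_def)
    also have "\<dots> = F a k * Abs_fps (g k) * E k b" using k by simp
    finally show "(\<Sum>l\<in>{1..n}. F a k * Gp g k l * E l b) = F a k * Abs_fps (g k) * E k b" .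
  qed
  finally show ?thesis .
qed

lemma sum_nth0: "(\<Sum>k\<in>A. F k * G k * E k) $ 0 = (\<Sum>k\<in>A. F k $ 0 * G k $ 0 * E k $ 0)"
  by (simp add: fps_sum_nth)

lemma Fp0: "Fp f a k $ 0 = (if a = k then 1 else 0)" by (simp add: Fp_def)
lemma Ep0: "Ep e k b $ 0 = (if k = b then 1 else if k < b then e k b 0 else 0)" by (simp add: Ep_def)
lemma Fm0: "Fm f a k $ 0 = (if a = k then 1 else if k < a then f a k 0 else 0)" by (simp add: Fm_def)
lemma Em0: "Em e k b $ 0 = (if k = b then 1 else 0)" by (simp add: Em_def)

lemma tri:
  "Fp f a a = 1" "a < k \<Longrightarrow> Fp f a k = 0" "Ep e k k = 1" "b < k \<Longrightarrow> Ep e k b = 0"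
  "Fm f a a = 1" "a < k \<Longrightarrow> Fm f a k = 0" "Em e k k = 1" "b < k \<Longrightarrow> Em e k b = 0"
  by (simp_all add: Fp_def Ep_def Fm_def Em_def)

lemma const_plus:
  assumes "gauss n (Tps tp) (Fp f) (Gp gp) (Ep e)" "a \<in> {1..n}" "b \<in> {1..n}" "a \<le> b"
  shows "tp a b 0 = gp a 0 * (if a = b then 1 else e a b 0)"
proof -
  have "tp a b 0 = (\<Sum>k\<in>{1..n}. Fp f a k * Abs_fps (gp k) * Ep e k b) $ 0"
    using gauss_dec[OF assms(1-3)] Tps_nth[symmetric] by metis
  also have "\<dots> = (\<Sum>k\<in>{1..n}. if k = a then gp a 0 * (if a = b then 1 else e a b 0) else 0)"
    unfolding sum_nth0 using assms(4) by (intro sum.cong refl) (auto simp: Fp0 Ep0)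
  also have "\<dots> = gp a 0 * (if a = b then 1 else e a b 0)" using assms(2) by simp
  finally show ?thesis .
qed

lemma const_minus:
  assumes "gauss n (Tps tm) (Fm f) (Gp gm) (Em e)" "a \<in> {1..n}" "b \<in> {1..n}" "b \<le> a"
  shows "tm a b 0 = (if a = b then 1 else f a b 0) * gm b 0"
proof -
  have "tm a b 0 = (\<Sum>k\<in>{1..n}. Fm f a k * Abs_fps (gm k) * Em e k b) $ 0"
    using gauss_dec[OF assms(1-3)] Tps_nth[symmetric] by metis
  also have "\<dots> = (\<Sum>k\<in>{1..n}. if k = b then (if a = b then 1 else f a b 0) * gm b 0 else 0)"
    unfolding sum_nth0 using assms(4) by (intro sum.cong refl) (auto simp: Fm0 Em0)
  also have "\<dots> = (if a = b then 1 else f a b 0) * gm b 0" using assms(3) by simp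
  finally show ?thesis .
qed



lemma extract_row:
  fixes sc :: "Cv \<Rightarrow> 'a::ring_1"
  assumes "PP (fps_const X) (fps_const Y) (fps_const (sc vv)) (fps_const Kc) i n R" "i \<in> {1..n}"
  shows "Y * R i $ m = sc vv * R i $ m * Y \<and> X * R i $ m = R i $ m * X + Kc * Y * R (Suc i) $ m"
proof -
  have h: "fps_const Y * R i = fps_const (sc vv) * R i * fps_const Y"
     "fps_const X * R i = R i * fps_const X + fps_const Kc * fps_const Y * R (Suc i)"
    using assms unfolding PP_def by auto
  show ?thesis
    using arg_cong[OF h(1), of "\<lambda>F. F $ m"] arg_cong[OF h(2), of "\<lambda>F. F $ m"] by simp
qed

lemma extract_other:
  fixes sc :: "Cv \<Rightarrow> 'a::ring_1"
  assumes "PP (fps_const X) (fps_const Y) (fps_const (sc vv)) (fps_const Kc) i n R" "Suc i \<in> {1..n}"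
  shows "Y * R (Suc i) $ m = R (Suc i) $ m * Y"
proof -
  have h: "fps_const Y * R (Suc i) = R (Suc i) * fps_const Y"
    using assms unfolding PP_def by auto
  show ?thesis
    using arg_cong[OF h(1), of "\<lambda>F. F $ m"] by simp
qed

theorem proposition3p21:
  fixes sc :: "Cv \<Rightarrow> 'a::ring_1"
    and n :: nat
    and tp tm :: "nat \<Rightarrow> nat \<Rightarrow> nat \<Rightarrow> 'a"
    and e f :: "nat \<Rightarrow> nat \<Rightarrow> int \<Rightarrow> 'a"
    and gp gm :: "nat \<Rightarrow> nat \<Rightarrow> 'a"
  assumes "Cv_algebra sc"
    and "RTT_relations sc n tp tm"
    and "gauss_decomp n tp tm f gp gm e"
    and "1 \<le> j" and "j < i" and "i < n"
  shows "\<forall>r::int.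
           e j (i + 1) r = sc (inverse (vv - inverse vv)) * qcomm sc (inverse vv) (e i (i + 1) 0) (e j i r)
         \<and> f (i + 1) j r = sc (inverse (inverse vv - vv)) * qcomm sc vv (f i j r) (f (i + 1) i 0)"
proof -
  note sc = assms(1)
  have units: "\<And>k. k \<in> {1..n} \<Longrightarrow> tp k k 0 * tm k k 0 = 1 \<and> tm k k 0 * tp k k 0 = 1"
    using assms(2) unfolding RTT_relations_def by blast
  have zeros: "\<And>a b. a \<in> {1..n} \<Longrightarrow> b \<in> {1..n} \<Longrightarrow> b < a \<Longrightarrow> tp a b 0 = 0 \<and> tm b a 0 = 0"
    using assms(2) unfolding RTT_relations_def by blast
  have RTT: "RTT_rel sc n tp tm True True" "RTT_rel sc n tp tm False False" "RTT_rel sc n tp tm False True"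
    using assms(2) unfolding RTT_relations_def by blast+
  have gP: "gauss n (Tps tp) (Fp f) (Gp gp) (Ep e)" and gM: "gauss n (Tps tm) (Fm f) (Gp gm) (Em e)"
    using assms(3) unfolding gauss_decomp_def by blast+
  have iN: "i < n" using assms by simp
  have ii: "i \<in> {1..n}" "Suc i \<in> {1..n}" "j \<in> {1..n}" using assms by auto
  define V :: "'a fps" where "V = fps_const (sc vv)"
  define K :: "'a fps" where "K = fps_const (sc (vv - inverse vv))"
  have cV: "central V" unfolding V_def by (rule fps_central) (rule sc_basic(5)[OF sc])
  have cK: "central K" unfolding K_def by (rule fps_central) (rule sc_basic(5)[OF sc])
  have gp0: "gp k 0 = tp k k 0" if "k \<in> {1..n}" for k
    using const_plus[OF gP that that] by simp
  have gm0: "gm k 0 = tm k k 0" if "k \<in> {1..n}" for k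
    using const_minus[OF gM that that] by simp
  have cancP: "\<And>k h. k \<in> {1..n} \<Longrightarrow> Abs_fps (gp k) * h = 0 \<Longrightarrow> h = 0"
              "\<And>k h. k \<in> {1..n} \<Longrightarrow> h * Abs_fps (gp k) = 0 \<Longrightarrow> h = 0"
  proof -
    fix k h assume k: "k \<in> {1..n}"
    have u: "Abs_fps (gp k) $ 0 * tm k k 0 = 1" "tm k k 0 * Abs_fps (gp k) $ 0 = 1"
      using units[OF k] gp0[OF k] by auto
    show "Abs_fps (gp k) * h = 0 \<Longrightarrow> h = 0" by (rule fps_canc(2)[OF u])
  next
    fix k h assume k: "k \<in> {1..n}"
    have u: "Abs_fps (gp k) $ 0 * tm k k 0 = 1" "tm k k 0 * Abs_fps (gp k) $ 0 = 1"
      using units[OF k] gp0[OF k] by auto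
    show "h * Abs_fps (gp k) = 0 \<Longrightarrow> h = 0" by (rule fps_canc(1)[OF u])
  qed
  have cancM: "\<And>k h. k \<in> {1..n} \<Longrightarrow> Abs_fps (gm k) * h = 0 \<Longrightarrow> h = 0"
              "\<And>k h. k \<in> {1..n} \<Longrightarrow> h * Abs_fps (gm k) = 0 \<Longrightarrow> h = 0"
  proof -
    fix k h assume k: "k \<in> {1..n}"
    have u: "Abs_fps (gm k) $ 0 * tp k k 0 = 1" "tp k k 0 * Abs_fps (gm k) $ 0 = 1"
      using units[OF k] gm0[OF k] by auto
    show "Abs_fps (gm k) * h = 0 \<Longrightarrow> h = 0" by (rule fps_canc(2)[OF u])
  next
    fix k h assume k: "k \<in> {1..n}"
    have u: "Abs_fps (gm k) $ 0 * tp k k 0 = 1" "tp k k 0 * Abs_fps (gm k) $ 0 = 1"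
      using units[OF k] gm0[OF k] by auto
    show "h * Abs_fps (gm k) = 0 \<Longrightarrow> h = 0" by (rule fps_canc(1)[OF u])
  qed
  have Zr: "\<And>b. b \<in> {1..n} \<Longrightarrow> b < i \<Longrightarrow> tp i b 0 = 0" using zeros ii(1) by blast
  have Zc: "\<And>c. c \<in> {1..n} \<Longrightarrow> c < i \<Longrightarrow> tm c i 0 = 0" using zeros ii(1) by blast
  have ik1: "sc (inverse (vv - inverse vv)) * sc (vv - inverse vv) = 1"
    using vv_facts(2) sc_basic(3,4)[OF sc] by (metis left_inverse)
  have ik2: "sc (inverse (inverse vv - vv)) * (- sc (vv - inverse vv)) = 1"
  proof -
    have "- sc (vv - inverse vv) = sc (inverse vv - vv)" using sc_basic(2)[OF sc, of "vv - inverse vv"] by simp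
    then show ?thesis using vv_facts(3) sc_basic(3,4)[OF sc] by (metis left_inverse)
  qed
  have ivvs: "sc (inverse vv) * sc vv = 1" by (rule sc_inv_vv[OF sc])
  have cs: "\<And>c z. sc c * z = z * sc c" by (rule sc_basic(5)[OF sc])
  let ?X = "fps_const (tp i (Suc i) 0)" and ?Y = "fps_const (tp i i 0)"
  have rowP: "PP ?X ?Y V K i n (Tps tp a)" if "a \<in> {1..n}" "a < i" for a
    using rowPP[OF sc RTT(1) Zr that iN] unfolding V_def K_def by simp
  have rowM: "PP ?X ?Y V K i n (Tps tm a)" if "a \<in> {1..n}" "a < i" for a
    using rowPP[OF sc RTT(3) Zr that iN] unfolding V_def K_def by simp
  have PEp: "PP ?X ?Y V K i n (Ep e j)"
    by (rule E_ind[where T="Tps tp" and F="Fp f" and G="\<lambda>k. Abs_fps (gp k)" and E="Ep e",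
          OF gauss_dec[OF gP] tri(1) tri(2) tri(3) tri(4) cancP(1) cancP(2) cV cK iN rowP ii(3) assms(5)])
  have PEm: "PP ?X ?Y V K i n (Em e j)"
    by (rule E_ind[where T="Tps tm" and F="Fm f" and G="\<lambda>k. Abs_fps (gm k)" and E="Em e",
          OF gauss_dec[OF gM] tri(5) tri(6) tri(7) tri(8) cancM(1) cancM(2) cV cK iN rowM ii(3) assms(5)])
  have Xe: "tp i (Suc i) 0 = tp i i 0 * e i (Suc i) 0"
    using const_plus[OF gP ii(1) ii(2)] gp0[OF ii(1)] by simp
  have Efin: "e j (Suc i) r = sc (inverse (vv - inverse vv)) * (e i (Suc i) 0 * e j i r - sc (inverse vv) * (e j i r * e i (Suc i) 0))"
    if h1: "tp i i 0 * e j i r = sc vv * e j i r * tp i i 0"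
     and h2: "tp i (Suc i) 0 * e j i r = e j i r * tp i (Suc i) 0 + sc (vv - inverse vv) * tp i i 0 * e j (Suc i) r" for r
    by (rule finalE[OF h1 h2 Xe conjunct2[OF units[OF ii(1)]] conjunct1[OF units[OF ii(1)]] cs cs cs ivvs ik1])
  have Epart: "e j (Suc i) r = sc (inverse (vv - inverse vv)) * (e i (Suc i) 0 * e j i r - sc (inverse vv) * (e j i r * e i (Suc i) 0))" for r
  proof (cases "0 \<le> r")
    case True
    have a: "Ep e j i $ nat r = e j i r" "Ep e j (Suc i) $ nat r = e j (Suc i) r"
      using True assms(5) by (simp_all add: Ep_def)
    show ?thesis using extract_row[where sc=sc, OF PEp[unfolded V_def K_def] ii(1), of "nat r"] unfolding a
      by (intro Efin) auto
  next
    case False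
    have a: "Em e j i $ nat (- r) = e j i r" "Em e j (Suc i) $ nat (- r) = e j (Suc i) r"
      using False assms(5) by (simp_all add: Em_def)
    show ?thesis using extract_row[where sc=sc, OF PEm[unfolded V_def K_def] ii(1), of "nat (- r)"] unfolding a
      by (intro Efin) auto
  qed
  let ?X' = "fps_const (tm (Suc i) i 0)" and ?Y' = "fps_const (tm i i 0)"
  have colP: "PP ?X' ?Y' V K i n (\<lambda>c. Tps tp c d)" if "d \<in> {1..n}" "d < i" for d
    using colPP[OF sc RTT(3) Zc that iN] unfolding V_def K_def by simp
  have colM: "PP ?X' ?Y' V K i n (\<lambda>c. Tps tm c d)" if "d \<in> {1..n}" "d < i" for d
    using colPP[OF sc RTT(2) Zc that iN] unfolding V_def K_def by simp
  have PFp: "PP ?X' ?Y' V K i n (\<lambda>c. Fp f c j)"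
    by (rule F_ind[where T="Tps tp" and F="Fp f" and G="\<lambda>k. Abs_fps (gp k)" and E="Ep e",
          OF gauss_dec[OF gP] tri(1) tri(2) tri(3) tri(4) cancP(1) cancP(2) cV cK iN colP ii(3) assms(5)])
  have PFm: "PP ?X' ?Y' V K i n (\<lambda>c. Fm f c j)"
    by (rule F_ind[where T="Tps tm" and F="Fm f" and G="\<lambda>k. Abs_fps (gm k)" and E="Em e",
          OF gauss_dec[OF gM] tri(5) tri(6) tri(7) tri(8) cancM(1) cancM(2) cV cK iN colM ii(3) assms(5)])
  have Xf: "tm (Suc i) i 0 = f (Suc i) i 0 * tm i i 0"
    using const_minus[OF gM ii(2) ii(1)] gm0[OF ii(1)] by simp
  have Ffin: "f (Suc i) j r = sc (inverse (inverse vv - vv)) * (f i j r * f (Suc i) i 0 - sc vv * (f (Suc i) i 0 * f i j r))"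
    if h1: "tm i i 0 * f i j r = sc vv * f i j r * tm i i 0"
     and h2: "tm (Suc i) i 0 * f i j r = f i j r * tm (Suc i) i 0 + sc (vv - inverse vv) * tm i i 0 * f (Suc i) j r"
     and h4: "tm i i 0 * f (Suc i) j r = f (Suc i) j r * tm i i 0" for r
    by (rule finalF[OF h1 h2 h4 Xf conjunct1[OF units[OF ii(1)]] conjunct2[OF units[OF ii(1)]] cs cs cs ivvs ik2])
  have Fpart: "f (Suc i) j r = sc (inverse (inverse vv - vv)) * (f i j r * f (Suc i) i 0 - sc vv * (f (Suc i) i 0 * f i j r))" for r
  proof (cases "0 < r")
    case True
    have a: "Fp f i j $ nat r = f i j r" "Fp f (Suc i) j $ nat r = f (Suc i) j r"
      using True assms(5) by (simp_all add: Fp_def)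
    show ?thesis using extract_row[where sc=sc, OF PFp[unfolded V_def K_def] ii(1), of "nat r"]
        extract_other[where sc=sc, OF PFp[unfolded V_def K_def] ii(2), of "nat r"] unfolding a
      by (intro Ffin) auto
  next
    case False
    have a: "Fm f i j $ nat (- r) = f i j r" "Fm f (Suc i) j $ nat (- r) = f (Suc i) j r"
      using False assms(5) by (simp_all add: Fm_def)
    show ?thesis using extract_row[where sc=sc, OF PFm[unfolded V_def K_def] ii(1), of "nat (- r)"]
        extract_other[where sc=sc, OF PFm[unfolded V_def K_def] ii(2), of "nat (- r)"] unfolding a
      by (intro Ffin) auto
  qed
  show ?thesis using Epart Fpart by (simp add: qcomm_def)
qed


end
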